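(* Let $\mathcal{C}$ be a hypergraph on $V$ and $F$ an edge of $\mathcal{C}$. (i) If $\operatorname{conn_h}(\operatorname{Ind}(\mathcal{C}-F))>\operatorname{conn_h}(\operatorname{Ind}(\mathcal{C}))$, then $\operatorname{conn_h}(\operatorname{Ind}(\mathcal{C}:F))\ge \operatorname{conn_h}(\operatorname{Ind}(\mathcal{C}))-|F|+1$. (ii) If $\operatorname{conn_h}(\operatorname{Ind}(\mathcal{C}:F))\ge \operatorname{conn_h}(\operatorname{Ind}(\mathcal{C}))-|F|+1$, then $\operatorname{conn_h}(\operatorname{Ind}(\mathcal{C}-F))\ge \operatorname{conn_h}(\operatorname{Ind}(\mathcal{C}))$.
   Context: A hypergraph $\mathcal{C}$ on a finite vertex set $V$ is a family of pairwise incomparable subsets of $V$ (its edges), each of cardinality at least $2$. The independence complex $\operatorname{Ind}(\mathcal{C})$ is the simplicial complex on $V$ whose faces are the subsets of $V$ containing no edge of $\mathcal{C}$ (if $V=\emptyset$ it is $\{\emptyset\}$). For an edge $F$: $\mathcal{C}-F$ is the hypergraph on $V$ with edge set $\mathcal{C}\setminus\{F\}$; $N_{\mathcal{C}}(F)=\bigcup\{E\setminus F : E\in\mathcal{C},\ |E\setminus F|=1\}$; and $\mathcal{C}:F$ is the hypergraph on $V\setminus(F\cup N_{\mathcal{C}}(F))$ whose edges are the members of cardinality at least $2$ among the inclusion-minimal members of the family $\{E\setminus F : E\in \mathcal{C}-F\}$. The homological connectivity $\operatorname{conn_h}(\Delta)$ is the largest integer $k$ such that $\tilde H_i(\Delta;\mathbb{Z})=0$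 for all $i\le k$ ($\infty$ if all vanish; $\operatorname{conn_h}(\{\emptyset\})=-2$). *)

theory Defs
  imports "HOL-Homology.Homology" "HOL-Library.Extended_Real"
begin

definition hypergraph :: "'a set \<Rightarrow> 'a set set \<Rightarrow> bool" where
  "hypergraph V C \<longleftrightarrow> finite V \<and>
     (\<forall>E\<in>C. E \<subseteq> V \<and> 2 \<le> card E) \<and>
     (\<forall>E\<in>C. \<forall>E'\<in>C. E \<subseteq> E' \<longrightarrow> E = E')"

definition Ind :: "'a set \<Rightarrow> 'a set set \<Rightarrow> 'a set set" where
  "Ind V C = {S. S \<subseteq> V \<and> \<not> (\<exists>E\<in>C. E \<subseteq> S)}"

definition hdel :: "'a set set \<Rightarrow> 'a set \<Rightarrow> 'a set set" where
  "hdel C F = C - {F}"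

definition hnbr :: "'a set set \<Rightarrow> 'a set \<Rightarrow> 'a set" where
  "hnbr C F = \<Union>{E - F | E. E \<in> C \<and> card (E - F) = 1}"

definition hcolon_vertices :: "'a set \<Rightarrow> 'a set set \<Rightarrow> 'a set \<Rightarrow> 'a set" where
  "hcolon_vertices V C F = V - (F \<union> hnbr C F)"

definition hcolon_edges :: "'a set set \<Rightarrow> 'a set \<Rightarrow> 'a set set" where
  "hcolon_edges C F =
     (let M = {E - F | E. E \<in> hdel C F}
      in {G \<in> M. (\<forall>H\<in>M. H \<subseteq> G \<longrightarrow> H = G) \<and> 2 \<le> card G})"

definition geom_real :: "'a set set \<Rightarrow> ('a \<Rightarrow> real) topology" where
  "geom_real \<Delta> = subtopology (powertop_real UNIV)
     {x. (\<forall>v. 0 \<le> x v) \<and> {v. x v \<noteq> 0} \<in> \<Delta> \<and> sum x {v. x v \<noteq> 0} = 1}"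

text \<open>The complex {{}} has
  reduced homology Z in degree -1 (augmented convention), so its connectivity is -2;
  every other complex containing the empty face has a nonempty realization, whose
  reduced simplicial homology is the reduced singular homology of the realization.\<close>
definition conn_h :: "'a set set \<Rightarrow> ereal" where
  "conn_h \<Delta> =
     (if \<Delta> = {{}} then -2
      else if (\<forall>i::int. trivial_group (reduced_homology_group i (geom_real \<Delta>))) then \<infinity>
      else ereal (of_int (GREATEST k::int. \<forall>i\<le>k.
                     trivial_group (reduced_homology_group i (geom_real \<Delta>)))))"

end

theory Submission
  imports Defs
begin

definition rset :: "'a set set \<Rightarrow> ('a \<Rightarrow> real) set" where
  "rset \<Delta> = {x. (\<forall>v. 0 \<le> x v) \<and> {v. x v \<noteq> 0} \<in> \<Delta> \<and> sum x {v. x v \<noteq> 0} = 1}"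

definition cplx :: "'a set set \<Rightarrow> bool" where
  "cplx K \<longleftrightarrow> (\<forall>\<sigma>\<in>K. finite \<sigma>) \<and> (\<forall>\<sigma>\<in>K. \<forall>\<tau>. \<tau> \<subseteq> \<sigma> \<longrightarrow> \<tau> \<in> K)"

lemma geom_real_eq: "geom_real \<Delta> = subtopology (powertop_real UNIV) (rset \<Delta>)"
  unfolding geom_real_def rset_def by simp

lemma topspace_geom_real [simp]: "topspace (geom_real \<Delta>) = rset \<Delta>"
  unfolding geom_real_eq by simp

lemma rset_mono: "\<Delta>' \<subseteq> \<Delta> \<Longrightarrow> rset \<Delta>' \<subseteq> rset \<Delta>"
  unfolding rset_def by auto

lemma subtopology_geom_real:
  "\<Delta>' \<subseteq> \<Delta> \<Longrightarrow> subtopology (geom_real \<Delta>) (rset \<Delta>') = geom_real \<Delta>'"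
  unfolding geom_real_eq subtopology_subtopology
  using rset_mono by (metis inf.absorb_iff2)

lemma rsetD:
  assumes "x \<in> rset K"
  shows "\<And>v. 0 \<le> x v" "{v. x v \<noteq> 0} \<in> K" "sum x {v. x v \<noteq> 0} = 1"
  using assms unfolding rset_def by auto

lemma rset_sum:
  assumes "cplx K" "x \<in> rset K" "finite T" "{v. x v \<noteq> 0} \<subseteq> T"
  shows "sum x T = 1"
proof -
  have "sum x T = sum x {v. x v \<noteq> 0}"
    by (rule sum.mono_neutral_right) (use assms in auto)
  then show ?thesis using rsetD[OF assms(2)] by simp
qed

lemma rsetI:
  assumes "cplx K" "T \<in> K" "\<And>v. 0 \<le> z v" "\<And>v. v \<notin> T \<Longrightarrow> z v = 0" "sum z T = 1"
  shows "z \<in> rset K"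
proof -
  have fin: "finite T" using assms(1,2) unfolding cplx_def by auto
  have sub: "{v. z v \<noteq> 0} \<subseteq> T" using assms(4) by auto
  have "{v. z v \<noteq> 0} \<in> K" using assms(1,2) sub unfolding cplx_def by auto
  moreover have "sum z {v. z v \<noteq> 0} = sum z T"
    by (rule sum.mono_neutral_left) (use fin sub in auto)
  ultimately show ?thesis using assms(3,5) unfolding rset_def by auto
qed

lemma rset_finite_supp:
  assumes "cplx K" "x \<in> rset K" shows "finite {v. x v \<noteq> 0}"
  using assms unfolding cplx_def rset_def by auto

lemma rset_nonempty_iff:
  assumes "cplx K"
  shows "rset K = {} \<longleftrightarrow> (\<forall>\<sigma>\<in>K. \<sigma> = {})"
proof
  assume e: "rset K = {}"
  show "\<forall>\<sigma>\<in>K. \<sigma> = {}"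
  proof (rule ccontr)
    assume "\<not> (\<forall>\<sigma>\<in>K. \<sigma> = {})"
    then obtain \<sigma> v where s: "\<sigma> \<in> K" "v \<in> \<sigma>" by auto
    then have "{v} \<in> K" using assms unfolding cplx_def by auto
    then have "(\<lambda>w. if w = v then 1 else 0::real) \<in> rset K"
      by (rule rsetI[OF assms]) auto
    with e show False by auto
  qed
next
  assume "\<forall>\<sigma>\<in>K. \<sigma> = {}"
  then show "rset K = {}" unfolding rset_def by auto
qed

lemma vertex_in_rset:
  assumes "cplx K" "{v} \<in> K"
  shows "(\<lambda>w. if w = v then 1 else 0::real) \<in> rset K"
  by (rule rsetI[OF assms]) auto

lemma cont_coord [continuous_intros]:
  "continuous_map (subtopology (powertop_real UNIV) W) euclideanreal (\<lambda>x. x v)"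
  by (rule continuous_map_from_subtopology) (rule continuous_map_product_projection, simp)

lemma cont_coord_snd [continuous_intros]:
  "continuous_map (prod_topology (top_of_set {0..1::real}) (subtopology (powertop_real UNIV) W))
     euclideanreal (\<lambda>z. snd z v)"
proof -
  have "continuous_map (prod_topology (top_of_set {0..1::real}) (subtopology (powertop_real UNIV) W))
     euclideanreal ((\<lambda>x. x v) \<circ> snd)"
    by (rule continuous_map_compose[OF continuous_map_snd cont_coord])
  then show ?thesis by (simp add: o_def)
qed

lemma cont_fst [continuous_intros]:
  "continuous_map (prod_topology (top_of_set {0..1::real}) Y) euclideanreal fst"
  using continuous_map_fst continuous_map_into_fulltopology by blast

lemma cont_Min [continuous_intros]:
  assumes "finite S" "S \<noteq> {}" "\<And>v. v \<in> S \<Longrightarrow> continuous_map X euclideanreal (\<lambda>x. g x v)"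
  shows "continuous_map X euclideanreal (\<lambda>x. Min ((\<lambda>v. g x v) ` S))"
  using assms
proof (induction S rule: finite_ne_induct)
  case (singleton v)
  then show ?case by simp
next
  case (insert v S)
  have eq: "(\<lambda>x. Min ((\<lambda>v. g x v) ` insert v S)) = (\<lambda>x. min (g x v) (Min ((\<lambda>v. g x v) ` S)))"
    using insert by (simp add: Min_insert)
  show ?case unfolding eq
    by (intro continuous_map_real_min) (use insert in auto)
qed

lemma cont_into_geom_real:
  "continuous_map X (geom_real \<Delta>) g \<longleftrightarrow>
     (\<forall>v. continuous_map X euclideanreal (\<lambda>x. g x v)) \<and> g ` topspace X \<subseteq> rset \<Delta>"
  unfolding geom_real_eq continuous_map_in_subtopology continuous_map_componentwise_UNIV by (auto simp: image_subset_iff_funcset)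

lemma cont_into_sub_geom_real:
  "continuous_map X (subtopology (geom_real \<Delta>) W) g \<longleftrightarrow>
     (\<forall>v. continuous_map X euclideanreal (\<lambda>x. g x v)) \<and> g ` topspace X \<subseteq> rset \<Delta> \<inter> W"
  unfolding geom_real_eq subtopology_subtopology continuous_map_in_subtopology continuous_map_componentwise_UNIV by (auto simp: image_subset_iff_funcset)

definition mn :: "'a set \<Rightarrow> ('a \<Rightarrow> real) \<Rightarrow> real" where
  "mn S x = Min ((\<lambda>v. x v) ` S)"

definition rho :: "'a set \<Rightarrow> ('a \<Rightarrow> real) \<Rightarrow> ('a \<Rightarrow> real)" where
  "rho S x = (\<lambda>v. (x v - (if v \<in> S then mn S x else 0)) / (1 - real (card S) * mn S x))"

definition emb :: "'a set \<Rightarrow> real \<Rightarrow> ('a \<Rightarrow> real) \<Rightarrow> ('a \<Rightarrow> real)" where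
  "emb S l y = (\<lambda>v. (1 - real (card S) * l) * y v + (if v \<in> S then l else 0))"

lemma mn_le: "finite S \<Longrightarrow> v \<in> S \<Longrightarrow> mn S x \<le> x v"
  unfolding mn_def by auto

lemma mn_attained: "finite S \<Longrightarrow> S \<noteq> {} \<Longrightarrow> \<exists>v\<in>S. x v = mn S x"
proof -
  assume "finite S" "S \<noteq> {}"
  then have "Min (x ` S) \<in> x ` S" by (intro Min_in) auto
  then show ?thesis by (auto simp: mn_def)
qed

lemma mn_nonneg: "(\<And>v. 0 \<le> x v) \<Longrightarrow> finite S \<Longrightarrow> S \<noteq> {} \<Longrightarrow> 0 \<le> mn S x"
  using mn_attained by metis

lemma mn_pos_iff:
  assumes "\<And>v. 0 \<le> x v" "finite S" "S \<noteq> {}"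
  shows "0 < mn S x \<longleftrightarrow> S \<subseteq> {v. x v \<noteq> 0}"
proof
  assume m: "0 < mn S x"
  show "S \<subseteq> {v. x v \<noteq> 0}"
  proof
    fix v assume "v \<in> S"
    then have "mn S x \<le> x v" using mn_le[OF assms(2)] by blast
    then show "v \<in> {v. x v \<noteq> 0}" using m by auto
  qed
next
  assume "S \<subseteq> {v. x v \<noteq> 0}"
  moreover obtain v where "v \<in> S" "x v = mn S x" using mn_attained[OF assms(2,3)] by blast
  ultimately show "0 < mn S x" using assms(1)[of v] by force
qed

lemma mn_zero_iff:
  assumes "\<And>v. 0 \<le> x v" "finite S" "S \<noteq> {}"
  shows "mn S x = 0 \<longleftrightarrow> \<not> S \<subseteq> {v. x v \<noteq> 0}"
  using mn_pos_iff[of x, OF assms] mn_nonneg[of x, OF assms] by linarith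

lemma mn_bound:
  assumes K: "cplx K" and x: "x \<in> rset K" and S: "finite S" "S \<noteq> {}"
  shows "real (card S) * mn S x \<le> 1"
proof -
  have fs: "finite {v. x v \<noteq> 0}" using rset_finite_supp[OF K x] .
  have "real (card S) * mn S x = (\<Sum>v\<in>S. mn S x)" by simp
  also have "\<dots> \<le> (\<Sum>v\<in>S. x v)" by (rule sum_mono) (use mn_le[OF S(1)] in auto)
  also have "\<dots> \<le> (\<Sum>v\<in>S \<union> {v. x v \<noteq> 0}. x v)"
    by (rule sum_mono2) (use S fs rsetD(1)[OF x] in auto)
  also have "\<dots> = 1" by (rule rset_sum[OF K x]) (use S fs in auto)
  finally show ?thesis .
qed

lemma emb_0 [simp]: "emb S 0 y = y"
  unfolding emb_def by auto

lemma emb_props: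
  assumes K: "cplx K" and S: "finite S" "S \<noteq> {}" and y: "y \<in> rset K" and my: "mn S y = 0"
    and l: "0 \<le> l" "real (card S) * l < 1"
    and face: "l = 0 \<or> {v. y v \<noteq> 0} \<union> S \<in> K"
  shows "emb S l y \<in> rset K" "mn S (emb S l y) = l"
proof -
  have y0: "\<And>v. 0 \<le> y v" using rsetD(1)[OF y] .
  show "mn S (emb S l y) = l"
  proof -
    obtain w where w: "w \<in> S" "y w = mn S y" using mn_attained[OF S] by blast
    have "Min ((\<lambda>v. emb S l y v) ` S) = l"
    proof (rule Min_eqI)
      show "finite ((\<lambda>v. emb S l y v) ` S)" using S by simp
      show "l \<le> z" if "z \<in> (\<lambda>v. emb S l y v) ` S" for z
        using that l y0 by (auto simp: emb_def)
      show "l \<in> (\<lambda>v. emb S l y v) ` S"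
        using w my by (auto simp: emb_def intro!: image_eqI[of _ _ w])
    qed
    then show ?thesis by (simp add: mn_def)
  qed
  show "emb S l y \<in> rset K"
  proof (cases "l = 0")
    case True then show ?thesis using y by simp
  next
    case False
    then have T: "{v. y v \<noteq> 0} \<union> S \<in> K" using face by auto
    have fs: "finite {v. y v \<noteq> 0}" using rset_finite_supp[OF K y] .
    show ?thesis
    proof (rule rsetI[OF K T])
      show "0 \<le> emb S l y v" for v using l y0[of v] by (auto simp: emb_def)
      show "emb S l y v = 0" if "v \<notin> {v. y v \<noteq> 0} \<union> S" for v
        using that by (auto simp: emb_def)
      have "sum (emb S l y) ({v. y v \<noteq> 0} \<union> S)
          = (1 - real (card S) * l) * (\<Sum>v\<in>{v. y v \<noteq> 0} \<union> S. y v)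
            + (\<Sum>v\<in>{v. y v \<noteq> 0} \<union> S. if v \<in> S then l else 0)"
        by (simp add: emb_def sum.distrib sum_distrib_left)
      also have "(\<Sum>v\<in>{v. y v \<noteq> 0} \<union> S. y v) = 1"
        by (rule rset_sum[OF K y]) (use fs S in auto)
      also have "(\<Sum>v\<in>{v. y v \<noteq> 0} \<union> S. if v \<in> S then l else 0) = (\<Sum>v\<in>S. l)"
        by (rule sum.mono_neutral_cong_right) (use fs S in auto)
      finally show "sum (emb S l y) ({v. y v \<noteq> 0} \<union> S) = 1" by simp
    qed
  qed
qed

lemma rho_props:
  assumes K: "cplx K" and S: "finite S" "S \<noteq> {}" and x: "x \<in> rset K"
    and m: "real (card S) * mn S x < 1"
  shows "rho S x \<in> rset K" "mn S (rho S x) = 0"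
    "{v. rho S x v \<noteq> 0} \<subseteq> {v. x v \<noteq> 0}"
    "emb S (mn S x) (rho S x) = x"
    "0 < mn S x \<Longrightarrow> {v. rho S x v \<noteq> 0} \<union> S \<in> K"
proof -
  have x0: "\<And>v. 0 \<le> x v" using rsetD(1)[OF x] .
  have m0: "0 \<le> mn S x" using mn_nonneg[of x, OF x0 S] .
  have den: "0 < 1 - real (card S) * mn S x" using m by simp
  have fs: "finite {v. x v \<noteq> 0}" using rset_finite_supp[OF K x] .
  show sub: "{v. rho S x v \<noteq> 0} \<subseteq> {v. x v \<noteq> 0}"
  proof
    fix v assume "v \<in> {v. rho S x v \<noteq> 0}"
    then have "x v - (if v \<in> S then mn S x else 0) \<noteq> 0" by (auto simp: rho_def)
    then show "v \<in> {v. x v \<noteq> 0}" using mn_le[OF S(1), of v x] m0 by (auto split: if_splits)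
  qed
  show "emb S (mn S x) (rho S x) = x"
    using den by (auto simp: emb_def rho_def field_simps)
  show "mn S (rho S x) = 0"
  proof -
    obtain w where w: "w \<in> S" "x w = mn S x" using mn_attained[OF S] by blast
    have "Min ((\<lambda>v. rho S x v) ` S) = 0"
    proof (rule Min_eqI)
      show "finite ((\<lambda>v. rho S x v) ` S)" using S by simp
      show "0 \<le> z" if "z \<in> (\<lambda>v. rho S x v) ` S" for z
        using that den mn_le[OF S(1), of _ x] by (auto simp: rho_def)
      show "0 \<in> (\<lambda>v. rho S x v) ` S"
        using w by (auto simp: rho_def intro!: image_eqI[of _ _ w])
    qed
    then show ?thesis by (simp add: mn_def)
  qed
  show "0 < mn S x \<Longrightarrow> {v. rho S x v \<noteq> 0} \<union> S \<in> K"
  proof -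
    assume "0 < mn S x"
    then have "S \<subseteq> {v. x v \<noteq> 0}" using mn_pos_iff[of x, OF x0 S] by blast
    then have "{v. rho S x v \<noteq> 0} \<union> S \<subseteq> {v. x v \<noteq> 0}" using sub by blast
    then show ?thesis using rsetD(2)[OF x] K unfolding cplx_def by blast
  qed
  show "rho S x \<in> rset K"
  proof (cases "mn S x = 0")
    case True
    then have "rho S x = x" by (auto simp: rho_def)
    then show ?thesis using x by simp
  next
    case False
    then have pos: "0 < mn S x" using m0 by simp
    then have SS: "S \<subseteq> {v. x v \<noteq> 0}" using mn_pos_iff[of x, OF x0 S] by blast
    show ?thesis
    proof (rule rsetI[OF K rsetD(2)[OF x]])
      show "0 \<le> rho S x v" for v
        using den mn_le[OF S(1), of v x] x0[of v] by (auto simp: rho_def)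
      show "rho S x v = 0" if "v \<notin> {v. x v \<noteq> 0}" for v
        using that SS by (auto simp: rho_def)
      have "sum (rho S x) {v. x v \<noteq> 0}
         = ((\<Sum>v\<in>{v. x v \<noteq> 0}. x v) - (\<Sum>v\<in>{v. x v \<noteq> 0}. if v \<in> S then mn S x else 0))
           / (1 - real (card S) * mn S x)"
        unfolding rho_def by (simp add: sum_divide_distrib[symmetric] sum_subtractf)
      also have "(\<Sum>v\<in>{v. x v \<noteq> 0}. if v \<in> S then mn S x else 0) = (\<Sum>v\<in>S. mn S x)"
        by (rule sum.mono_neutral_cong_right) (use fs SS in auto)
      also have "(\<Sum>v\<in>{v. x v \<noteq> 0}. x v) = 1" using rsetD(3)[OF x] by simp
      finally show "sum (rho S x) {v. x v \<noteq> 0} = 1" using den by simp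
    qed
  qed
qed

lemma rho_emb:
  assumes S: "finite S" "S \<noteq> {}" and me: "mn S (emb S l y) = l" and l: "real (card S) * l < 1"
  shows "rho S (emb S l y) = y"
  using l unfolding rho_def me by (auto simp: emb_def field_simps)

lemma iso_triv:
  "h \<in> iso G H \<Longrightarrow> group G \<Longrightarrow> group H \<Longrightarrow> trivial_group G \<longleftrightarrow> trivial_group H"
  by (meson is_isoI isomorphic_group_triviality)
lemma contractible_homology:
  assumes "contractible_space Y" "topspace Y \<noteq> {}"
  shows "trivial_group (homology_group p Y) \<longleftrightarrow> p \<noteq> 0"
proof (cases "p = 0")
  case True
  have "homology_group 0 Y \<cong> integer_group"
    by (rule isomorphic_integer_zeroth_homology_group)
       (use assms contractible_imp_path_connected_space in auto)
  then have "trivial_group (homology_group 0 Y) \<longleftrightarrow> trivial_group integer_group"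
    by (rule isomorphic_group_triviality) simp_all
  moreover have "\<not> trivial_group integer_group"
    unfolding trivial_group_def by (metis carrier_integer_group UNIV_I singletonD zero_neq_one)
  ultimately show ?thesis using True by simp
next
  case False
  then show ?thesis
    using trivial_reduced_homology_group_contractible_space[OF assms(1), of p]
    by (simp add: un_reduced_homology_group)
qed

lemma triv_rel_relativize:
  assumes "T \<subseteq> S" "\<And>q. trivial_group (relative_homology_group q (subtopology X S) T)"
  shows "trivial_group (relative_homology_group p X T) \<longleftrightarrow> trivial_group (relative_homology_group p X S)"
proof -
  have "hom_induced p X T X S id \<in> iso (relative_homology_group p X T) (relative_homology_group p X S)"
  proof (rule very_short_exact_sequence)
    show "exact_seq
         ([relative_homology_group(p - 1) (subtopology X S) T, relative_homology_group p X S, relative_homology_group p X T, relative_homology_group p (subtopology X S) T],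
          [hom_relboundary p X S T, hom_induced p X T X S id, hom_induced p (subtopology X S) T X T id])"
      using homology_exactness_triple_1 [OF \<open>T \<subseteq> S\<close>] homology_exactness_triple_3 [OF \<open>T \<subseteq> S\<close>]
      by (simp add: exact_seq_cons_iff)
    show "trivial_group (relative_homology_group p (subtopology X S) T)"
         "trivial_group (relative_homology_group(p - 1) (subtopology X S) T)"
      by (rule assms(2))+
  qed
  then show ?thesis by (rule iso_triv) simp_all
qed

definition rtriv :: "int \<Rightarrow> 'a set set \<Rightarrow> bool" where
  "rtriv q \<Delta> = (if rset \<Delta> = {} then q \<noteq> -1 else trivial_group (reduced_homology_group q (geom_real \<Delta>)))"

lemma sub_geom_real: "subtopology (geom_real \<Delta>) W = subtopology (powertop_real UNIV) (rset \<Delta> \<inter> W)"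
  unfolding geom_real_eq subtopology_subtopology ..

lemma topspace_sub_power [simp]: "topspace (subtopology (powertop_real UNIV) W) = W"
  by simp

lemma rho_mn0: "mn S x = 0 \<Longrightarrow> rho S x = x"
  by (rule ext) (simp add: rho_def)

lemma cont_mn_gen:
  assumes "finite S" "S \<noteq> {}" "\<And>v. continuous_map X euclideanreal (\<lambda>x. \<phi> x v)"
  shows "continuous_map X euclideanreal (\<lambda>x. mn S (\<phi> x))"
  unfolding mn_def by (rule cont_Min) (use assms in auto)

lemma cont_rho_gen:
  assumes "finite S" "S \<noteq> {}" "\<And>v. continuous_map X euclideanreal (\<lambda>x. \<phi> x v)"
    and "\<And>x. x \<in> topspace X \<Longrightarrow> real (card S) * mn S (\<phi> x) < 1"
  shows "continuous_map X euclideanreal (\<lambda>x. rho S (\<phi> x) v)"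
proof -
  have m: "continuous_map X euclideanreal (\<lambda>x. mn S (\<phi> x))" by (rule cont_mn_gen) (use assms in auto)
  have "continuous_map X euclideanreal
     (\<lambda>x. (\<phi> x v - (if v \<in> S then 1 else 0) * mn S (\<phi> x)) / (1 - real (card S) * mn S (\<phi> x)))"
    by (intro continuous_intros assms(3) m continuous_map_real_mult_left) (use assms(4) in force)
  moreover have "(\<lambda>x. rho S (\<phi> x) v) =
     (\<lambda>x. (\<phi> x v - (if v \<in> S then 1 else 0) * mn S (\<phi> x)) / (1 - real (card S) * mn S (\<phi> x)))"
    by (auto simp: rho_def)
  ultimately show ?thesis by simp
qed

lemma cont_emb_gen:
  assumes "continuous_map X euclideanreal l" "\<And>v. continuous_map X euclideanreal (\<lambda>x. \<phi> x v)"
  shows "continuous_map X euclideanreal (\<lambda>x. emb S (l x) (\<phi> x) v)"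
proof -
  have "continuous_map X euclideanreal
     (\<lambda>x. (1 - real (card S) * l x) * \<phi> x v + (if v \<in> S then 1 else 0) * l x)"
    by (intro continuous_intros assms continuous_map_real_mult_left)
  moreover have "(\<lambda>x. emb S (l x) (\<phi> x) v) =
     (\<lambda>x. (1 - real (card S) * l x) * \<phi> x v + (if v \<in> S then 1 else 0) * l x)"
    by (auto simp: emb_def)
  ultimately show ?thesis by simp
qed

locale core =
  fixes K :: "'a set set" and S :: "'a set"
  assumes K: "cplx K" and SK: "S \<in> K" and Sne: "S \<noteq> {}"
begin

lemma Sfin: "finite S" using K SK unfolding cplx_def by auto

abbreviation "n \<equiv> real (card S)"

lemma npos: "0 < n" using Sfin Sne by (simp add: card_gt_0_iff)

definition "KA = {\<sigma>\<in>K. \<not> S \<subseteq> \<sigma>}"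
definition "Lk = {\<sigma>\<in>K. \<not> S \<subseteq> \<sigma> \<and> \<sigma> \<union> S \<in> K}"
definition "Nset = {x\<in>rset K. n * mn S x < 1}"
definition "Uset = {x\<in>rset K. n * mn S x \<le> 1/2}"
definition "Cset = {x\<in>rset K. 1/2 < n * mn S x}"
definition "Dset = {x\<in>rset K. 1/2 < n * mn S x \<and> n * mn S x < 1}"

lemma KA_sub: "KA \<subseteq> K" unfolding KA_def by auto
lemma Lk_sub: "Lk \<subseteq> K" unfolding Lk_def by auto

lemma A_eq: "rset KA = {x\<in>rset K. mn S x = 0}"
proof -
  have "x \<in> rset KA \<longleftrightarrow> x \<in> rset K \<and> mn S x = 0" for x
  proof (cases "\<forall>v. 0 \<le> x v")
    case True
    then show ?thesis using mn_zero_iff[of x, OF _ Sfin Sne] unfolding rset_def KA_def by auto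
  next
    case False
    then show ?thesis unfolding rset_def by auto
  qed
  then show ?thesis by auto
qed

lemma Lk_eq: "rset Lk = {x\<in>rset K. mn S x = 0 \<and> {v. x v \<noteq> 0} \<union> S \<in> K}"
proof -
  have "x \<in> rset Lk \<longleftrightarrow> x \<in> rset K \<and> mn S x = 0 \<and> {v. x v \<noteq> 0} \<union> S \<in> K" for x
  proof (cases "\<forall>v. 0 \<le> x v")
    case True
    then show ?thesis using mn_zero_iff[of x, OF _ Sfin Sne] unfolding rset_def Lk_def by auto
  next
    case False
    then show ?thesis unfolding rset_def by auto
  qed
  then show ?thesis by auto
qed

lemma mn_ge0: "x \<in> rset K \<Longrightarrow> 0 \<le> mn S x"
  using rsetD(1) mn_nonneg Sfin Sne by metis

lemma cont_mn: "continuous_map (subtopology (powertop_real UNIV) W) euclideanreal (\<lambda>x. n * mn S x)"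
  by (intro continuous_map_real_mult_left cont_mn_gen[OF Sfin Sne] cont_coord)

lemma N_eq: "subtopology (geom_real K) Nset = subtopology (powertop_real UNIV) Nset"
  unfolding sub_geom_real Nset_def by (metis (no_types, lifting) Int_absorb1 mem_Collect_eq subsetI)

lemma step1_triv: "trivial_group (relative_homology_group q (subtopology (geom_real K) Nset) (rset KA))"
proof (rule trivial_relative_homology_group_alt)
  let ?Y = "subtopology (geom_real K) Nset"
  have sub2: "subtopology ?Y (rset KA) = subtopology (geom_real K) (Nset \<inter> rset KA)"
    by (simp add: subtopology_subtopology)
  show "continuous_map ?Y (subtopology ?Y (rset KA)) (rho S)"
    unfolding sub2 cont_into_sub_geom_real
  proof (intro conjI allI)
    fix v
    show "continuous_map ?Y euclideanreal (\<lambda>x. rho S x v)"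
      unfolding N_eq by (rule cont_rho_gen[OF Sfin Sne, of _ "\<lambda>x. x"], rule cont_coord, auto simp: Nset_def)
    show "rho S ` topspace ?Y \<subseteq> rset K \<inter> (Nset \<inter> rset KA)"
      using rho_props[OF K Sfin Sne] npos unfolding N_eq A_eq by (auto simp: Nset_def)
  qed
  define h where "h z = emb S (fst z * mn S (snd z)) (rho S (snd z))" for z :: "real \<times> ('a \<Rightarrow> real)"
  have hY: "h (t, x) \<in> rset K \<inter> Nset" if "t \<in> {0..1}" "x \<in> Nset" for t x
  proof -
    have x: "x \<in> rset K" "n * mn S x < 1" using that(2) by (auto simp: Nset_def)
    note r = rho_props[OF K Sfin Sne x]
    have m0: "0 \<le> mn S x" using mn_ge0 x by auto
    have l1: "0 \<le> t * mn S x" using that(1) m0 by simp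
    have "t * (n * mn S x) \<le> n * mn S x"
      by (rule mult_left_le_one_le) (use that(1) m0 npos in auto)
    then have l2: "n * (t * mn S x) < 1" using x(2) by (simp add: mult.left_commute)
    note l = l1 l2
    have face: "t * mn S x = 0 \<or> {v. rho S x v \<noteq> 0} \<union> S \<in> K"
      using r(5) m0 by (cases "mn S x = 0") auto
    note e = emb_props[OF K Sfin Sne r(1) r(2) l face]
    show ?thesis using e l unfolding h_def Nset_def by auto
  qed
  have "homotopic_with (\<lambda>k. k ` rset KA \<subseteq> rset KA) ?Y ?Y (\<lambda>x. h (0, x)) (\<lambda>x. h (1, x))"
    unfolding homotopic_with_def
  proof (intro exI conjI allI ballI)
    show "continuous_map (prod_topology (top_of_set {0..1::real}) ?Y) ?Y h"
      unfolding N_eq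
    proof -
      have "continuous_map (prod_topology (top_of_set {0..1::real}) (subtopology (powertop_real UNIV) Nset))
          (subtopology (geom_real K) Nset) h"
        unfolding cont_into_sub_geom_real
      proof (intro conjI allI)
        fix v
        show "continuous_map (prod_topology (top_of_set {0..1::real}) (subtopology (powertop_real UNIV) Nset))
            euclideanreal (\<lambda>x. h x v)"
          unfolding h_def
        proof (rule cont_emb_gen)
          show "continuous_map (prod_topology (top_of_set {0..1::real}) (subtopology (powertop_real UNIV) Nset))
             euclideanreal (\<lambda>x. fst x * mn S (snd x))"
            by (intro continuous_map_real_mult cont_fst cont_mn_gen[OF Sfin Sne] cont_coord_snd)
          show "continuous_map (prod_topology (top_of_set {0..1::real}) (subtopology (powertop_real UNIV) Nset))
             euclideanreal (\<lambda>x. rho S (snd x) v)" for v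
          proof (rule cont_rho_gen[OF Sfin Sne])
            show "continuous_map (prod_topology (top_of_set {0..1::real}) (subtopology (powertop_real UNIV) Nset))
             euclideanreal (\<lambda>x. snd x v)" for v by (rule cont_coord_snd)
            show "n * mn S (snd x) < 1"
              if "x \<in> topspace (prod_topology (top_of_set {0..1::real}) (subtopology (powertop_real UNIV) Nset))" for x
              using that by (auto simp: Nset_def)
          qed
        qed
        show "h ` topspace (prod_topology (top_of_set {0..1::real}) (subtopology (powertop_real UNIV) Nset))
            \<subseteq> rset K \<inter> Nset"
          using hY by auto
      qed
      then show "continuous_map (prod_topology (top_of_set {0..1::real}) (subtopology (powertop_real UNIV) Nset))
          (subtopology (powertop_real UNIV) Nset) h" unfolding N_eq .
    qed
    show "(\<lambda>x. h (t, x)) ` rset KA \<subseteq> rset KA" if "t \<in> {0..1}" for t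
      using that by (auto simp: h_def A_eq rho_mn0)
  qed auto
  then show "homotopic_with (\<lambda>k. k ` rset KA \<subseteq> rset KA) ?Y ?Y (rho S) id"
  proof (rule homotopic_with_eq)
    show "rho S x = h (0, x)" for x by (simp add: h_def)
    show "id x = h (1, x)" if "x \<in> topspace ?Y" for x
      using that rho_props(4)[OF K Sfin Sne] by (auto simp: h_def Nset_def)
    show "(h ` rset KA \<subseteq> rset KA) = (k ` rset KA \<subseteq> rset KA)"
      if "\<And>x. x \<in> topspace ?Y \<Longrightarrow> h x = k x" for h k
    proof -
      have "rset KA \<subseteq> topspace ?Y" using npos by (auto simp: A_eq Nset_def)
      then have "h ` rset KA = k ` rset KA" using that by (intro image_cong) auto
      then show ?thesis by simp
    qed
  qed
qed

lemma step1: "trivial_group (relative_homology_group p (geom_real K) (rset KA))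
   \<longleftrightarrow> trivial_group (relative_homology_group p (geom_real K) Nset)"
  by (rule triv_rel_relativize) (use npos step1_triv in \<open>auto simp: A_eq Nset_def\<close>)

end

context core begin

lemma step2: "trivial_group (relative_homology_group p (geom_real K) Nset)
   \<longleftrightarrow> trivial_group (relative_homology_group p (subtopology (geom_real K) Cset) Dset)"
proof -
  let ?G = "geom_real K"
  have contg: "continuous_map ?G euclideanreal (\<lambda>x. n * mn S x)"
    unfolding geom_real_eq by (rule cont_mn)
  have cl: "closedin ?G Uset"
  proof -
    have "closedin ?G {x \<in> topspace ?G. n * mn S x \<in> {..1/2}}"
      by (rule closedin_continuous_map_preimage[OF contg]) simp
    moreover have "{x \<in> topspace ?G. n * mn S x \<in> {..1/2}} = Uset" by (auto simp: Uset_def)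
    ultimately show ?thesis by simp
  qed
  have op: "openin ?G Nset"
  proof -
    have "openin ?G {x \<in> topspace ?G. n * mn S x \<in> {..<1}}"
      by (rule openin_continuous_map_preimage[OF contg]) (use open_lessThan open_openin in blast)
    moreover have "{x \<in> topspace ?G. n * mn S x \<in> {..<1}} = Nset" by (auto simp: Nset_def)
    ultimately show ?thesis by simp
  qed
  have UN: "?G closure_of Uset \<subseteq> ?G interior_of Nset"
    unfolding closure_of_closedin[OF cl] interior_of_openin[OF op] by (auto simp: Uset_def Nset_def)
  have NK: "Nset \<subseteq> rset K" by (auto simp: Nset_def)
  note ex = homology_excision_axiom[OF UN NK, of p]
  have e1: "rset K - Uset = Cset" by (auto simp: Uset_def Cset_def)
  have e2: "Nset - Uset = Dset" by (auto simp: Uset_def Nset_def Dset_def)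
  have e3: "subtopology ?G (rset K) = ?G" by (metis subtopology_topspace topspace_geom_real)
  from ex[unfolded e1 e2 e3] show ?thesis
    by (rule iso_triv[symmetric]) simp_all
qed

definition "bary = (\<lambda>v. if v \<in> S then 1 / n else 0)"

lemma bary_in: "bary \<in> rset K" "mn S bary = 1 / n"
proof -
  show "bary \<in> rset K"
  proof (rule rsetI[OF K SK])
    show "0 \<le> bary v" for v using npos by (auto simp: bary_def)
    show "bary v = 0" if "v \<notin> S" for v using that by (auto simp: bary_def)
    show "sum bary S = 1" using npos by (simp add: bary_def)
  qed
  have "(\<lambda>v. bary v) ` S = {1 / n}" using Sne by (auto simp: bary_def)
  then show "mn S bary = 1 / n" by (simp add: mn_def)
qed

lemma bary_C: "bary \<in> Cset"
  using bary_in npos by (auto simp: Cset_def)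

lemma C_eq: "subtopology (geom_real K) Cset = subtopology (powertop_real UNIV) Cset"
  unfolding sub_geom_real Cset_def by (metis (no_types, lifting) Int_absorb1 mem_Collect_eq subsetI)

lemma D_eq: "subtopology (geom_real K) Dset = subtopology (powertop_real UNIV) Dset"
  unfolding sub_geom_real Dset_def by (metis (no_types, lifting) Int_absorb1 mem_Collect_eq subsetI)

lemma C_contr: "contractible_space (subtopology (geom_real K) Cset)"
proof -
  define h where "h z = (\<lambda>v. (1 - fst z) * snd z v + fst z * bary v)" for z :: "real \<times> ('a \<Rightarrow> real)"
  have hC: "h (t, x) \<in> rset K \<inter> Cset" if t: "t \<in> {0..1}" and xC: "x \<in> Cset" for t x
  proof -
    have x: "x \<in> rset K" "1/2 < n * mn S x" using xC by (auto simp: Cset_def)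
    have x0: "\<And>v. 0 \<le> x v" using rsetD(1)[OF x(1)] .
    have "0 < n * mn S x" using x(2) by linarith
    then have mpos: "0 < mn S x" using npos by (simp add: zero_less_mult_iff)
    have SS: "S \<subseteq> {v. x v \<noteq> 0}" using mn_pos_iff[of x, OF x0 Sfin Sne] mpos by blast
    have fs: "finite {v. x v \<noteq> 0}" using rset_finite_supp[OF K x(1)] .
    have b0: "\<And>v. 0 \<le> bary v" using npos by (auto simp: bary_def)
    have hin: "h (t, x) \<in> rset K"
    proof (rule rsetI[OF K rsetD(2)[OF x(1)]])
      show "0 \<le> h (t, x) v" for v using t x0[of v] b0[of v] by (auto simp: h_def)
      show "h (t, x) v = 0" if "v \<notin> {v. x v \<noteq> 0}" for v
        using that SS by (auto simp: h_def bary_def)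
      have "sum (h (t, x)) {v. x v \<noteq> 0}
          = (1 - t) * (\<Sum>v\<in>{v. x v \<noteq> 0}. x v) + t * (\<Sum>v\<in>{v. x v \<noteq> 0}. bary v)"
        by (simp add: h_def sum.distrib sum_distrib_left)
      also have "(\<Sum>v\<in>{v. x v \<noteq> 0}. bary v) = sum bary S"
        by (rule sum.mono_neutral_right) (use fs SS in \<open>auto simp: bary_def\<close>)
      also have "sum bary S = 1" using npos by (simp add: bary_def)
      also have "(\<Sum>v\<in>{v. x v \<noteq> 0}. x v) = 1" using rsetD(3)[OF x(1)] by simp
      finally show "sum (h (t, x)) {v. x v \<noteq> 0} = 1" by simp
    qed
    obtain w where w: "w \<in> S" "h (t, x) w = mn S (h (t, x))" using mn_attained[OF Sfin Sne] by blast
    have hw: "h (t, x) w = (1 - t) * x w + t * (1 / n)" by (simp add: h_def bary_def w(1))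
    have "n * mn S (h (t, x)) = n * ((1 - t) * x w + t * (1 / n))" using w(2) hw by simp
    also have "\<dots> = (1 - t) * (n * x w) + t" using npos by (simp add: algebra_simps)
    finally have eq: "n * mn S (h (t, x)) = (1 - t) * (n * x w) + t" .
    have "(1 - t) * (n * mn S x) \<le> (1 - t) * (n * x w)"
      by (rule mult_left_mono) (use t mn_le[OF Sfin w(1), of x] npos in auto)
    then have ge: "n * mn S (h (t, x)) \<ge> (1 - t) * (n * mn S x) + t" using eq by linarith
    have le1: "n * mn S x \<le> 1" using mn_bound[OF K x(1) Sfin Sne] .
    have "(1 - t) * (n * mn S x) + t = n * mn S x + t * (1 - n * mn S x)" by (simp add: algebra_simps)
    moreover have "0 \<le> t * (1 - n * mn S x)" using t le1 by (intro mult_nonneg_nonneg) auto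
    ultimately have "1/2 < n * mn S (h (t, x))" using ge x(2) by linarith
    then show ?thesis using hin by (auto simp: Cset_def)
  qed
  have "homotopic_with (\<lambda>x. True) (subtopology (geom_real K) Cset) (subtopology (geom_real K) Cset) id (\<lambda>x. bary)"
    unfolding homotopic_with_def
  proof (intro exI conjI allI ballI)
    show "continuous_map (prod_topology (top_of_set {0..1::real}) (subtopology (geom_real K) Cset))
        (subtopology (geom_real K) Cset) h"
      unfolding cont_into_sub_geom_real
    proof (intro conjI allI)
      fix v
      show "continuous_map (prod_topology (top_of_set {0..1::real}) (subtopology (geom_real K) Cset))
          euclideanreal (\<lambda>x. h x v)"
        unfolding C_eq h_def
        by (intro continuous_intros cont_fst cont_coord_snd continuous_map_real_mult)
      show "h ` topspace (prod_topology (top_of_set {0..1::real}) (subtopology (geom_real K) Cset))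
          \<subseteq> rset K \<inter> Cset"
        using hC by (auto simp: C_eq)
    qed
    show "h (0, x) = id x" for x by (auto simp: h_def)
    show "h (1, x) = bary" for x by (auto simp: h_def)
  qed auto
  then show ?thesis unfolding contractible_space_def by blast
qed

end

context core begin

definition "mu0 = 2 / (3 * n)"

lemma n_mu0: "n * mu0 = 2/3" using npos by (simp add: mu0_def)

lemma rho_D: assumes "x \<in> Dset" shows "rho S x \<in> rset Lk"
proof -
  have x: "x \<in> rset K" "n * mn S x < 1" "1/2 < n * mn S x" using assms by (auto simp: Dset_def)
  have "0 < n * mn S x" using x(3) by linarith
  then have mpos: "0 < mn S x" using npos by (simp add: zero_less_mult_iff)
  note r = rho_props[OF K Sfin Sne x(1) x(2)]
  show ?thesis using r(1,2) r(5)[OF mpos] by (simp add: Lk_eq)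
qed

lemma emb_D: assumes "y \<in> rset Lk" shows "emb S mu0 y \<in> Dset" "rho S (emb S mu0 y) = y"
proof -
  have y: "y \<in> rset K" "mn S y = 0" "{v. y v \<noteq> 0} \<union> S \<in> K" using assms by (auto simp: Lk_eq)
  have l: "0 \<le> mu0" "n * mu0 < 1" using npos n_mu0 by (auto simp: mu0_def)
  note e = emb_props[OF K Sfin Sne y(1) y(2) l] y(3)
  show "emb S mu0 y \<in> Dset" using e n_mu0 by (auto simp: Dset_def)
  show "rho S (emb S mu0 y) = y" by (rule rho_emb[OF Sfin Sne]) (use e l in auto)
qed

lemma D_Lk_equiv: "subtopology (geom_real K) Dset homotopy_equivalent_space geom_real Lk"
proof -
  let ?D = "subtopology (geom_real K) Dset"
  have f: "continuous_map ?D (geom_real Lk) (rho S)"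
    unfolding cont_into_geom_real
  proof (intro conjI allI)
    fix v
    show "continuous_map ?D euclideanreal (\<lambda>x. rho S x v)"
      unfolding D_eq
    proof (rule cont_rho_gen[OF Sfin Sne, of _ "\<lambda>x. x"])
      show "continuous_map (subtopology (powertop_real UNIV) Dset) euclideanreal (\<lambda>x. x v)" for v
        by (rule cont_coord)
      show "n * mn S x < 1" if "x \<in> topspace (subtopology (powertop_real UNIV) Dset)" for x
        using that by (auto simp: Dset_def)
    qed
    show "rho S ` topspace ?D \<subseteq> rset Lk" using rho_D by (auto simp: D_eq)
  qed
  have g: "continuous_map (geom_real Lk) ?D (emb S mu0)"
    unfolding cont_into_sub_geom_real
  proof (intro conjI allI)
    fix v
    show "continuous_map (geom_real Lk) euclideanreal (\<lambda>x. emb S mu0 x v)"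
      unfolding geom_real_eq by (rule cont_emb_gen) (auto intro: cont_coord)
    show "emb S mu0 ` topspace (geom_real Lk) \<subseteq> rset K \<inter> Dset"
      using emb_D(1) by (auto simp: Dset_def)
  qed
  define h where "h z = emb S ((1 - fst z) * mu0 + fst z * mn S (snd z)) (rho S (snd z))"
    for z :: "real \<times> ('a \<Rightarrow> real)"
  have hD: "h (t, x) \<in> rset K \<inter> Dset" if t: "t \<in> {0..1}" and xD: "x \<in> Dset" for t x
  proof -
    have x: "x \<in> rset K" "n * mn S x < 1" "1/2 < n * mn S x" using xD by (auto simp: Dset_def)
    have "0 < n * mn S x" using x(3) by linarith
    then have mpos: "0 < mn S x" using npos by (simp add: zero_less_mult_iff)
    note r = rho_props[OF K Sfin Sne x(1) x(2)]
    define l where "l = (1 - t) * mu0 + t * mn S x"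
    have "n * l = (1 - t) * (n * mu0) + t * (n * mn S x)"
      unfolding l_def by (simp add: algebra_simps)
    then have nl: "n * l = (1 - t) * (2/3) + t * (n * mn S x)" unfolding n_mu0 .
    have a: "(1 - t) * (2/3) + t * (n * mn S x) < 1"
    proof (cases "t = 0")
      case False
      then have "t * (n * mn S x) < t * 1" using t x(2) by (intro mult_strict_left_mono) auto
      then show ?thesis using t by (auto simp: field_simps)
    qed simp
    have b: "1/2 < (1 - t) * (2/3) + t * (n * mn S x)"
    proof (cases "t = 0")
      case False
      then have "t * (1/2) < t * (n * mn S x)" using t x(3) by (intro mult_strict_left_mono) auto
      then show ?thesis using t by (auto simp: field_simps)
    qed simp
    have l0: "0 \<le> l" unfolding l_def using t mpos npos
      by (intro add_nonneg_nonneg mult_nonneg_nonneg) (auto simp: mu0_def)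
    have l1: "n * l < 1" using nl a by simp
    have face: "l = 0 \<or> {v. rho S x v \<noteq> 0} \<union> S \<in> K" using r(5)[OF mpos] by blast
    note e = emb_props[OF K Sfin Sne r(1) r(2) l0 l1 face]
    show ?thesis using e nl a b unfolding h_def l_def[symmetric] by (auto simp: Dset_def l_def)
  qed
  have "homotopic_with (\<lambda>x. True) ?D ?D (\<lambda>x. h (0, x)) (\<lambda>x. h (1, x))"
    unfolding homotopic_with_def
  proof (intro exI conjI allI ballI)
    show "continuous_map (prod_topology (top_of_set {0..1::real}) ?D) ?D h"
      unfolding cont_into_sub_geom_real
    proof (intro conjI allI)
      fix v
      show "continuous_map (prod_topology (top_of_set {0..1::real}) ?D) euclideanreal (\<lambda>x. h x v)"
        unfolding D_eq h_def
      proof (rule cont_emb_gen)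
        show "continuous_map (prod_topology (top_of_set {0..1::real}) (subtopology (powertop_real UNIV) Dset))
           euclideanreal (\<lambda>x. (1 - fst x) * mu0 + fst x * mn S (snd x))"
          by (intro continuous_intros continuous_map_real_mult cont_fst cont_mn_gen[OF Sfin Sne] cont_coord_snd)
        show "continuous_map (prod_topology (top_of_set {0..1::real}) (subtopology (powertop_real UNIV) Dset))
           euclideanreal (\<lambda>x. rho S (snd x) v)" for v
        proof (rule cont_rho_gen[OF Sfin Sne])
          show "continuous_map (prod_topology (top_of_set {0..1::real}) (subtopology (powertop_real UNIV) Dset))
           euclideanreal (\<lambda>x. snd x v)" for v by (rule cont_coord_snd)
          show "n * mn S (snd x) < 1"
            if "x \<in> topspace (prod_topology (top_of_set {0..1::real}) (subtopology (powertop_real UNIV) Dset))" for x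
            using that by (auto simp: Dset_def)
        qed
      qed
      show "h ` topspace (prod_topology (top_of_set {0..1::real}) ?D) \<subseteq> rset K \<inter> Dset"
        using hD by (auto simp: D_eq)
    qed
  qed auto
  then have gf: "homotopic_with (\<lambda>x. True) ?D ?D (emb S mu0 \<circ> rho S) id"
  proof (rule homotopic_with_eq)
    show "(emb S mu0 \<circ> rho S) x = h (0, x)" for x by (simp add: h_def)
    show "id x = h (1, x)" if "x \<in> topspace ?D" for x
      using that rho_props(4)[OF K Sfin Sne] by (auto simp: h_def Dset_def D_eq)
  qed auto
  have fg: "homotopic_with (\<lambda>x. True) (geom_real Lk) (geom_real Lk) (rho S \<circ> emb S mu0) id"
    by (rule homotopic_with_equal) (use continuous_map_compose[OF g f] emb_D(2) in auto)
  show ?thesis unfolding homotopy_equivalent_space_def using f g gf fg by blast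
qed

lemma step3: "trivial_group (relative_homology_group p (subtopology (geom_real K) Cset) Dset)
   \<longleftrightarrow> rtriv (p - 1) Lk"
proof (cases "Dset = {}")
  case True
  then have "rset Lk = {}" using emb_D(1) by blast
  then have r: "rtriv (p - 1) Lk \<longleftrightarrow> p \<noteq> 0" by (simp add: rtriv_def)
  have ne: "topspace (subtopology (geom_real K) Cset) \<noteq> {}" using bary_C bary_in by auto
  show ?thesis unfolding True r by (rule contractible_homology[OF C_contr ne])
next
  case False
  then have ne: "rset Lk \<noteq> {}" using rho_D by blast
  have ne2: "topspace (subtopology (geom_real K) Cset) \<inter> Dset \<noteq> {}"
    using False by (auto simp: Dset_def Cset_def)
  have sub: "subtopology (subtopology (geom_real K) Cset) Dset = subtopology (geom_real K) Dset"
    by (simp add: subtopology_subtopology Cset_def Dset_def Int_absorb1 subset_iff)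
  note i1 = iso_relative_homology_of_contractible[OF C_contr ne2, of p, unfolded sub]
  have i2: "reduced_homology_group (p - 1) (subtopology (geom_real K) Dset) \<cong> reduced_homology_group (p - 1) (geom_real Lk)"
    by (rule homotopy_equivalent_space_imp_isomorphic_reduced_homology_groups[OF D_Lk_equiv])
  have "trivial_group (relative_homology_group p (subtopology (geom_real K) Cset) Dset)
     \<longleftrightarrow> trivial_group (reduced_homology_group (p - 1) (subtopology (geom_real K) Dset))"
    by (rule iso_triv[OF i1]) simp_all
  also have "\<dots> \<longleftrightarrow> trivial_group (reduced_homology_group (p - 1) (geom_real Lk))"
    by (rule isomorphic_group_triviality[OF i2]) simp_all
  finally show ?thesis using ne by (simp add: rtriv_def)
qed

theorem core_thm: "trivial_group (relative_homology_group p (geom_real K) (rset KA)) \<longleftrightarrow> rtriv (p - 1) Lk"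
  using step1 step2 step3 by blast

end

definition J :: "'a set \<Rightarrow> 'a set set \<Rightarrow> 'a set set" where
  "J F L = {\<sigma> \<union> \<tau> | \<sigma> \<tau>. \<sigma> \<subseteq> F \<and> \<sigma> \<noteq> F \<and> \<tau> \<in> L}"

definition cone :: "'a set \<Rightarrow> 'a set set \<Rightarrow> 'a set set" where
  "cone F L = {\<sigma> \<union> \<tau> | \<sigma> \<tau>. \<sigma> \<subseteq> F \<and> \<tau> \<in> L}"

lemma J_cplx: assumes "finite F" "cplx L" shows "cplx (J F L)"
  unfolding cplx_def
proof (intro conjI ballI allI impI)
  fix \<rho> assume "\<rho> \<in> J F L"
  then obtain \<sigma> \<tau> where "\<rho> = \<sigma> \<union> \<tau>" "\<sigma> \<subseteq> F" "\<tau> \<in> L" unfolding J_def by blast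
  moreover have "finite \<sigma>" using \<open>\<sigma> \<subseteq> F\<close> assms(1) by (rule finite_subset)
  moreover have "finite \<tau>" using assms(2) \<open>\<tau> \<in> L\<close> unfolding cplx_def by blast
  ultimately show "finite \<rho>" by simp
next
  fix \<rho> \<rho>' assume "\<rho> \<in> J F L" "\<rho>' \<subseteq> \<rho>"
  then obtain \<sigma> \<tau> where st: "\<rho> = \<sigma> \<union> \<tau>" "\<sigma> \<subseteq> F" "\<sigma> \<noteq> F" "\<tau> \<in> L" unfolding J_def by blast
  have "\<rho>' = (\<rho>' \<inter> \<sigma>) \<union> (\<rho>' \<inter> \<tau>)" using st \<open>\<rho>' \<subseteq> \<rho>\<close> by auto
  moreover have "\<rho>' \<inter> \<sigma> \<subseteq> F" "\<rho>' \<inter> \<sigma> \<noteq> F" using st by auto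
  moreover have "\<rho>' \<inter> \<tau> \<in> L" using st assms(2) unfolding cplx_def by blast
  ultimately show "\<rho>' \<in> J F L" unfolding J_def by blast
qed

lemma cone_cplx: assumes "finite F" "cplx L" shows "cplx (cone F L)"
  unfolding cplx_def
proof (intro conjI ballI allI impI)
  fix \<rho> assume "\<rho> \<in> cone F L"
  then obtain \<sigma> \<tau> where "\<rho> = \<sigma> \<union> \<tau>" "\<sigma> \<subseteq> F" "\<tau> \<in> L" unfolding cone_def by blast
  moreover have "finite \<sigma>" using \<open>\<sigma> \<subseteq> F\<close> assms(1) by (rule finite_subset)
  moreover have "finite \<tau>" using assms(2) \<open>\<tau> \<in> L\<close> unfolding cplx_def by blast
  ultimately show "finite \<rho>" by simp
next
  fix \<rho> \<rho>' assume "\<rho> \<in> cone F L" "\<rho>' \<subseteq> \<rho>"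
  then obtain \<sigma> \<tau> where st: "\<rho> = \<sigma> \<union> \<tau>" "\<sigma> \<subseteq> F" "\<tau> \<in> L" unfolding cone_def by blast
  have "\<rho>' = (\<rho>' \<inter> \<sigma>) \<union> (\<rho>' \<inter> \<tau>)" using st \<open>\<rho>' \<subseteq> \<rho>\<close> by auto
  moreover have "\<rho>' \<inter> \<sigma> \<subseteq> F" using st by auto
  moreover have "\<rho>' \<inter> \<tau> \<in> L" using st assms(2) unfolding cplx_def by blast
  ultimately show "\<rho>' \<in> cone F L" unfolding cone_def by blast
qed

lemma contractible_apex:
  assumes K: "cplx K" and u: "{u} \<in> K" and ins: "\<And>\<sigma>. \<sigma> \<in> K \<Longrightarrow> insert u \<sigma> \<in> K"
  shows "contractible_space (geom_real K)"
proof -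
  define d where "d = (\<lambda>w. if w = u then 1 else 0::real)"
  define h where "h z = (\<lambda>v. (1 - fst z) * snd z v + fst z * d v)" for z :: "real \<times> ('a \<Rightarrow> real)"
  have hK: "h (t, x) \<in> rset K" if t: "t \<in> {0..1}" and x: "x \<in> rset K" for t x
  proof -
    have x0: "\<And>v. 0 \<le> x v" using rsetD(1)[OF x] .
    have T: "insert u {v. x v \<noteq> 0} \<in> K" using ins rsetD(2)[OF x] by blast
    have fs: "finite {v. x v \<noteq> 0}" using rset_finite_supp[OF K x] .
    show ?thesis
    proof (rule rsetI[OF K T])
      show "0 \<le> h (t, x) v" for v using t x0[of v] by (auto simp: h_def d_def)
      show "h (t, x) v = 0" if "v \<notin> insert u {v. x v \<noteq> 0}" for v
        using that by (auto simp: h_def d_def)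
      have "sum (h (t, x)) (insert u {v. x v \<noteq> 0})
          = (1 - t) * (\<Sum>v\<in>insert u {v. x v \<noteq> 0}. x v) + t * (\<Sum>v\<in>insert u {v. x v \<noteq> 0}. d v)"
        by (simp add: h_def sum.distrib sum_distrib_left)
      also have "(\<Sum>v\<in>insert u {v. x v \<noteq> 0}. d v) = 1"
        using fs by (simp add: d_def sum.delta)
      also have "(\<Sum>v\<in>insert u {v. x v \<noteq> 0}. x v) = 1"
        by (rule rset_sum[OF K x]) (use fs in auto)
      finally show "sum (h (t, x)) (insert u {v. x v \<noteq> 0}) = 1" by simp
    qed
  qed
  have "homotopic_with (\<lambda>x. True) (geom_real K) (geom_real K) id (\<lambda>x. d)"
    unfolding homotopic_with_def
  proof (intro exI conjI allI ballI)
    show "continuous_map (prod_topology (top_of_set {0..1::real}) (geom_real K)) (geom_real K) h"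
      unfolding cont_into_geom_real
    proof (intro conjI allI)
      fix v
      show "continuous_map (prod_topology (top_of_set {0..1::real}) (geom_real K)) euclideanreal (\<lambda>x. h x v)"
        unfolding geom_real_eq h_def
        by (intro continuous_intros cont_fst cont_coord_snd continuous_map_real_mult)
      show "h ` topspace (prod_topology (top_of_set {0..1::real}) (geom_real K)) \<subseteq> rset K"
        using hK by auto
    qed
    show "h (0, x) = id x" for x by (auto simp: h_def)
    show "h (1, x) = d" for x by (auto simp: h_def)
  qed auto
  then show ?thesis unfolding contractible_space_def by blast
qed

lemma J_single: assumes "\<forall>\<tau>\<in>L. \<tau> \<inter> {u} = {}" shows "J {u} L = L"
proof (intro Set.set_eqI iffI)
  fix \<rho> assume "\<rho> \<in> J {u} L"
  then obtain \<sigma> \<tau> where st: "\<rho> = \<sigma> \<union> \<tau>" "\<sigma> \<subseteq> {u}" "\<sigma> \<noteq> {u}" "\<tau> \<in> L"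
    unfolding J_def by blast
  have "\<sigma> = {}" using st(2,3) by (metis subset_singletonD)
  then show "\<rho> \<in> L" using st by simp
next
  fix \<rho> assume "\<rho> \<in> L"
  moreover have "\<rho> = {} \<union> \<rho>" by simp
  moreover have "({}::'a set) \<subseteq> {u}" "({}::'a set) \<noteq> {u}" by auto
  ultimately show "\<rho> \<in> J {u} L" unfolding J_def by blast
qed

lemma JI: "\<sigma> \<subseteq> F \<Longrightarrow> \<sigma> \<noteq> F \<Longrightarrow> \<tau> \<in> L \<Longrightarrow> \<rho> = \<sigma> \<union> \<tau> \<Longrightarrow> \<rho> \<in> J F L"
  unfolding J_def by blast

lemma JE: "\<rho> \<in> J F L \<Longrightarrow> (\<And>\<sigma> \<tau>. \<rho> = \<sigma> \<union> \<tau> \<Longrightarrow> \<sigma> \<subseteq> F \<Longrightarrow> \<sigma> \<noteq> F \<Longrightarrow> \<tau> \<in> L \<Longrightarrow> P) \<Longrightarrow> P"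
  unfolding J_def by blast

lemma coneI: "\<sigma> \<subseteq> F \<Longrightarrow> \<tau> \<in> L \<Longrightarrow> \<rho> = \<sigma> \<union> \<tau> \<Longrightarrow> \<rho> \<in> cone F L"
  unfolding cone_def by blast

lemma coneE: "\<rho> \<in> cone F L \<Longrightarrow> (\<And>\<sigma> \<tau>. \<rho> = \<sigma> \<union> \<tau> \<Longrightarrow> \<sigma> \<subseteq> F \<Longrightarrow> \<tau> \<in> L \<Longrightarrow> P) \<Longrightarrow> P"
  unfolding cone_def by blast

lemma Q_step:
  fixes L :: "'a set set"
  assumes L: "cplx L" "{} \<in> L" and F: "finite F" "F = insert w F0" "w \<notin> F0" "F0 \<noteq> {}"
    and disj: "\<forall>\<tau>\<in>L. \<tau> \<inter> F = {}"
  shows "rtriv p (J F L) \<longleftrightarrow> rtriv (p - 1) (J F0 L)"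
proof -
  have KJ: "cplx (J F L)" by (rule J_cplx[OF F(1) L(1)])
  have wJ: "{w} \<in> J F L"
    by (rule JI[of "{w}" _ "{}"]) (use F L(2) in auto)
  interpret c: core "J F L" "{w}" by unfold_locales (use KJ wJ in auto)
  have KA: "c.KA = cone F0 L"
  proof (intro Set.set_eqI iffI)
    fix \<rho> assume r: "\<rho> \<in> c.KA"
    then have r1: "\<rho> \<in> J F L" "w \<notin> \<rho>" unfolding c.KA_def by auto
    from r1(1) show "\<rho> \<in> cone F0 L"
    proof (rule JE)
      fix \<sigma> \<tau> assume st: "\<rho> = \<sigma> \<union> \<tau>" "\<sigma> \<subseteq> F" "\<sigma> \<noteq> F" "\<tau> \<in> L"
      have "\<sigma> \<subseteq> F0" using st r1(2) F by auto
      then show "\<rho> \<in> cone F0 L" using st by (intro coneI) auto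
    qed
  next
    fix \<rho> assume "\<rho> \<in> cone F0 L"
    then show "\<rho> \<in> c.KA"
    proof (rule coneE)
      fix \<sigma> \<tau> assume st: "\<rho> = \<sigma> \<union> \<tau>" "\<sigma> \<subseteq> F0" "\<tau> \<in> L"
      have wt: "w \<notin> \<tau>" using disj st F by auto
      have "\<rho> \<in> J F L" by (rule JI[of \<sigma> _ \<tau>]) (use st F in auto)
      moreover have "w \<notin> \<rho>" using st wt F by auto
      ultimately show "\<rho> \<in> c.KA" unfolding c.KA_def by auto
    qed
  qed
  have Lk: "c.Lk = J F0 L"
  proof (intro Set.set_eqI iffI)
    fix \<rho> assume "\<rho> \<in> c.Lk"
    then have r: "\<rho> \<in> J F L" "w \<notin> \<rho>" "\<rho> \<union> {w} \<in> J F L" unfolding c.Lk_def by auto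
    from r(3) obtain \<sigma>' \<tau>' where st': "\<rho> \<union> {w} = \<sigma>' \<union> \<tau>'" "\<sigma>' \<subseteq> F" "\<sigma>' \<noteq> F" "\<tau>' \<in> L"
      by (rule JE)
    from r(1) show "\<rho> \<in> J F0 L"
    proof (rule JE)
      fix \<sigma> \<tau> assume st: "\<rho> = \<sigma> \<union> \<tau>" "\<sigma> \<subseteq> F" "\<sigma> \<noteq> F" "\<tau> \<in> L"
      have s0: "\<sigma> \<subseteq> F0" using st r(2) F by auto
      have "\<sigma> \<noteq> F0"
      proof
        assume "\<sigma> = F0"
        then have "F \<subseteq> \<sigma>' \<union> \<tau>'" using st st'(1) F by auto
        moreover have "\<tau>' \<inter> F = {}" using disj st'(4) by auto
        ultimately have "F \<subseteq> \<sigma>'" by auto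
        then show False using st'(2,3) by auto
      qed
      then show "\<rho> \<in> J F0 L" using st s0 by (intro JI[of \<sigma> _ \<tau>]) auto
    qed
  next
    fix \<rho> assume "\<rho> \<in> J F0 L"
    then show "\<rho> \<in> c.Lk"
    proof (rule JE)
      fix \<sigma> \<tau> assume st: "\<rho> = \<sigma> \<union> \<tau>" "\<sigma> \<subseteq> F0" "\<sigma> \<noteq> F0" "\<tau> \<in> L"
      have wt: "w \<notin> \<tau>" using disj st F by auto
      have a: "\<rho> \<in> J F L" by (rule JI[of \<sigma> _ \<tau>]) (use st F in auto)
      have ne: "\<sigma> \<union> {w} \<noteq> F"
      proof
        assume "\<sigma> \<union> {w} = F"
        then have "F0 \<subseteq> \<sigma>" using F by auto
        then show False using st(2,3) by auto
      qed
      have b: "\<rho> \<union> {w} \<in> J F L" by (rule JI[of "\<sigma> \<union> {w}" _ \<tau>]) (use st F ne in auto)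
      have "w \<notin> \<rho>" using st F wt by auto
      then show "\<rho> \<in> c.Lk" using a b unfolding c.Lk_def by auto
    qed
  qed
  have core: "trivial_group (relative_homology_group p (geom_real (J F L)) (rset (cone F0 L)))
      \<longleftrightarrow> rtriv (p - 1) (J F0 L)"
    using c.core_thm[of p] unfolding KA Lk .
  have sub: "cone F0 L \<subseteq> J F L" using c.KA_sub unfolding KA .
  obtain u where u: "u \<in> F0" using F by blast
  have f0: "finite F0" using F by simp
  have conec: "cplx (cone F0 L)" by (rule cone_cplx[OF f0 L(1)])
  have ucone: "{u} \<in> cone F0 L" by (rule coneI[of "{u}" _ "{}"]) (use u L(2) in auto)
  have insc: "insert u \<sigma> \<in> cone F0 L" if "\<sigma> \<in> cone F0 L" for \<sigma>
    using that
  proof (rule coneE)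
    fix \<sigma>1 \<tau> assume st: "\<sigma> = \<sigma>1 \<union> \<tau>" "\<sigma>1 \<subseteq> F0" "\<tau> \<in> L"
    show "insert u \<sigma> \<in> cone F0 L" by (rule coneI[of "insert u \<sigma>1" _ \<tau>]) (use st u in auto)
  qed
  have contr: "contractible_space (subtopology (geom_real (J F L)) (rset (cone F0 L)))"
    unfolding subtopology_geom_real[OF sub] by (rule contractible_apex[OF conec ucone insc])
  have ne: "topspace (geom_real (J F L)) \<inter> rset (cone F0 L) \<noteq> {}"
    using vertex_in_rset[OF conec ucone] rset_mono[OF sub] by auto
  have neK: "rset (J F L) \<noteq> {}" using vertex_in_rset[OF KJ wJ] by auto
  have "rtriv p (J F L) \<longleftrightarrow> trivial_group (reduced_homology_group p (geom_real (J F L)))"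
    using neK by (simp add: rtriv_def)
  also have "\<dots> \<longleftrightarrow> trivial_group (relative_homology_group p (geom_real (J F L)) (rset (cone F0 L)))"
    by (rule iso_triv[OF iso_reduced_homology_by_contractible[OF contr ne]]) simp_all
  also have "\<dots> \<longleftrightarrow> rtriv (p - 1) (J F0 L)" by (rule core)
  finally show ?thesis .
qed

lemma Q:
  fixes L :: "'a set set"
  assumes L: "cplx L" "{} \<in> L"
  shows "finite F \<Longrightarrow> F \<noteq> {} \<Longrightarrow> \<forall>\<tau>\<in>L. \<tau> \<inter> F = {} \<Longrightarrow>
     rtriv p (J F L) \<longleftrightarrow> rtriv (p - int (card F) + 1) L"
proof (induction F arbitrary: p rule: finite_ne_induct)
  case (singleton u)
  then show ?case using J_single[of L u] by simp
next
  case (insert w F0)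
  have "rtriv p (J (insert w F0) L) \<longleftrightarrow> rtriv (p - 1) (J F0 L)"
    by (rule Q_step[OF L _ refl]) (use insert in auto)
  also have "\<dots> \<longleftrightarrow> rtriv (p - 1 - int (card F0) + 1) L"
    using insert by auto
  also have "p - 1 - int (card F0) + 1 = p - int (card (insert w F0)) + 1"
    using insert by simp
  finally show ?case .
qed

lemma exact_triv:
  assumes "exact_seq ([C,B,A],[g,f])" "trivial_group A" "trivial_group C"
  shows "trivial_group B"
proof -
  have gh: "group_hom A B f" and gC: "group C" and gB: "g \<in> hom B C"
    and ker: "kernel B C g = f ` carrier A"
    using assms(1) by auto
  have grB: "group B" using gh unfolding group_hom_def group_hom_axioms_def by auto
  have "kernel B C g = carrier B"
    using assms(3) gB unfolding kernel_def trivial_group_def hom_def by auto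
  moreover have "f ` carrier A = {one B}"
    using assms(2) group_hom.hom_one[OF gh] unfolding trivial_group_def by auto
  ultimately show ?thesis using ker grB unfolding trivial_group_def by auto
qed

lemma le_of_ints:
  fixes a b :: ereal
  assumes a: "a = \<infinity> \<or> (\<exists>m::int. a = ereal (of_int m))" and b: "b = \<infinity> \<or> (\<exists>m::int. b = ereal (of_int m))"
    and h: "\<And>k::int. ereal (of_int k) \<le> a \<Longrightarrow> ereal (of_int k) \<le> b"
  shows "a \<le> b"
proof (cases "a = \<infinity>")
  case True
  show ?thesis
  proof (cases "b = \<infinity>")
    case False
    then obtain m where m: "b = ereal (of_int m)" using b by blast
    have "ereal (of_int (m + 1)) \<le> a" using True by (simp only: ereal_less_eq(1))
    then have "ereal (of_int (m + 1)) \<le> b" by (rule h)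
    then have "of_int (m + 1) \<le> (of_int m :: real)" using m by (simp only: ereal_less_eq(3))
    then show ?thesis by simp
  next
    case True
    then show ?thesis by (simp only: ereal_less_eq(1))
  qed
next
  case False
  then obtain m where m: "a = ereal (of_int m)" using a by blast
  have "ereal (of_int m) \<le> a" using m by (simp only: order_refl)
  then have "ereal (of_int m) \<le> b" by (rule h)
  then show ?thesis using m by (simp only:)
qed

lemma ereal_t1: "ereal (of_int m) - ereal (real n) + 1 = ereal (of_int (m - int n + 1))"
  by (simp add: one_ereal_def)
lemma ereal_t2: "(\<infinity>::ereal) - ereal (real n) + 1 = \<infinity>"
  by (simp add: one_ereal_def)

lemma arith_core:
  fixes cX cA cL :: ereal and TX TA TL :: "int \<Rightarrow> bool" and n :: nat
  assumes chX: "\<And>k::int. ereal (of_int k) \<le> cX \<longleftrightarrow> (\<forall>i\<le>k. TX i)"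
    and chA: "\<And>k::int. ereal (of_int k) \<le> cA \<longleftrightarrow> (\<forall>i\<le>k. TA i)"
    and chL: "\<And>k::int. ereal (of_int k) \<le> cL \<longleftrightarrow> (\<forall>i\<le>k. TL i)"
    and caX: "cX = \<infinity> \<or> (\<exists>m::int. cX = ereal (of_int m))"
    and caA: "cA = \<infinity> \<or> (\<exists>m::int. cA = ereal (of_int m))"
    and caL: "cL = \<infinity> \<or> (\<exists>m::int. cL = ereal (of_int m))"
    and la: "\<And>i. TX i \<Longrightarrow> TA (i - 1) \<Longrightarrow> TL (i - int n)"
    and lb: "\<And>i. TL (i - int n) \<Longrightarrow> TA i \<Longrightarrow> TX i"
  shows "(cX > cA \<longrightarrow> cL \<ge> cA - ereal (real n) + 1) \<and> (cL \<ge> cA - ereal (real n) + 1 \<longrightarrow> cX \<ge> cA)"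
proof (intro conjI impI)
  assume lt: "cA < cX"
  have "cA \<noteq> \<infinity>" using lt by auto
  then obtain m where m: "cA = ereal (of_int m)" using caA by blast
  have X1: "ereal (of_int (m + 1)) \<le> cX"
  proof (cases "cX = \<infinity>")
    case False
    then obtain m' where m': "cX = ereal (of_int m')" using caX by blast
    have "ereal (of_int m) < ereal (of_int m')" using lt m m' by simp
    then have "m < m'" by simp
    then have "m + 1 \<le> m'" by simp
    then show ?thesis unfolding m' by simp
  qed simp
  have TXs: "\<forall>i\<le>m + 1. TX i" using X1 chX by blast
  have "ereal (of_int m) \<le> cA" using m by simp
  then have TAs: "\<forall>i\<le>m. TA i" using chA by blast
  have "\<forall>j\<le>m - int n + 1. TL j"
  proof (intro allI impI)
    fix j assume j: "j \<le> m - int n + 1"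
    have "TX (j + int n)" using TXs j by simp
    moreover have "TA (j + int n - 1)" using TAs j by simp
    ultimately have "TL ((j + int n) - int n)" by (rule la)
    then show "TL j" by simp
  qed
  then have "ereal (of_int (m - int n + 1)) \<le> cL" using chL by blast
  then show "cA - ereal (real n) + 1 \<le> cL" unfolding m ereal_t1 .
next
  assume ge: "cA - ereal (real n) + 1 \<le> cL"
  show "cA \<le> cX"
  proof (rule le_of_ints[OF caA caX])
    fix k :: int assume k: "ereal (of_int k) \<le> cA"
    have TAs: "\<forall>i\<le>k. TA i" using chA k by blast
    have TLs: "\<forall>j\<le>k - int n + 1. TL j"
    proof (cases "cA = \<infinity>")
      case True
      then have "cL = \<infinity>" using ge unfolding True ereal_t2 by simp
      then have "ereal (of_int (k - int n + 1)) \<le> cL" by simp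
      then show ?thesis using chL by blast
    next
      case False
      then obtain m where m: "cA = ereal (of_int m)" using caA by blast
      then have "k \<le> m" using k by simp
      have "ereal (of_int (m - int n + 1)) \<le> cL" using ge unfolding m ereal_t1 .
      then have "\<forall>j\<le>m - int n + 1. TL j" using chL by blast
      then show ?thesis using \<open>k \<le> m\<close> by auto
    qed
    have "\<forall>i\<le>k. TX i"
    proof (intro allI impI)
      fix i assume i: "i \<le> k"
      have "TL (i - int n)" using TLs i by simp
      moreover have "TA i" using TAs i by simp
      ultimately show "TX i" by (rule lb)
    qed
    then show "ereal (of_int k) \<le> cX" using chX by blast
  qed
qed

lemma conn_cases: "conn_h \<Delta> = \<infinity> \<or> (\<exists>m::int. conn_h \<Delta> = ereal (of_int m))"
  unfolding conn_h_def by (auto intro: exI[of _ "-2"])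

lemma conn_char:
  assumes K: "cplx \<Delta>" and e: "{} \<in> \<Delta>"
  shows "ereal (of_int k) \<le> conn_h \<Delta> \<longleftrightarrow> (\<forall>i\<le>k. rtriv i \<Delta>)"
proof (cases "\<Delta> = {{}}")
  case True
  have "rset \<Delta> = {}"
  proof (rule ccontr)
    assume "rset \<Delta> \<noteq> {}"
    then obtain x where x: "x \<in> rset \<Delta>" by blast
    have "{v. x v \<noteq> 0} = {}" using rsetD(2)[OF x] True by simp
    moreover have "sum x {v. x v \<noteq> 0} = 1" using rsetD(3)[OF x] .
    ultimately show False by simp
  qed
  then have e1: "(\<forall>i\<le>k. rtriv i \<Delta>) \<longleftrightarrow> (\<forall>i\<le>k. i \<noteq> -1)" by (simp add: rtriv_def)
  have e2: "(\<forall>i\<le>k. i \<noteq> -1) \<longleftrightarrow> k \<le> -2"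
  proof
    assume h: "\<forall>i\<le>k. i \<noteq> -1"
    show "k \<le> -2"
    proof (rule ccontr)
      assume "\<not> k \<le> -2"
      then have "-1 \<le> k" by simp
      then show False using h by blast
    qed
  qed auto
  have "(\<forall>i\<le>k. rtriv i \<Delta>) \<longleftrightarrow> k \<le> -2" using e1 e2 by simp
  moreover have "ereal (of_int k) \<le> conn_h \<Delta> \<longleftrightarrow> k \<le> -2"
  proof -
    have "real_of_int k \<le> -2 \<longleftrightarrow> k \<le> -2"
      using of_int_le_iff[of k "-2", where 'a=real] by simp
    then show ?thesis using True by (simp add: conn_h_def)
  qed
  ultimately show ?thesis by simp
next
  case False
  have ne: "rset \<Delta> \<noteq> {}"
  proof
    assume "rset \<Delta> = {}"
    then have "\<forall>\<sigma>\<in>\<Delta>. \<sigma> = {}" using rset_nonempty_iff[OF K] by blast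
    then have "\<Delta> = {{}}" using e by auto
    then show False using False by simp
  qed
  define T where "T i = trivial_group (reduced_homology_group i (geom_real \<Delta>))" for i
  have rt: "rtriv i \<Delta> \<longleftrightarrow> T i" for i using ne by (simp add: rtriv_def T_def)
  show ?thesis
  proof (cases "\<forall>i. T i")
    case True
    then show ?thesis using False by (simp add: conn_h_def rt T_def)
  next
    case nall: False
    then obtain j where j: "\<not> T j" by blast
    define P where "P k = (\<forall>i\<le>k. T i)" for k
    have Pm1: "P (-1)" unfolding P_def T_def
    proof (intro allI impI)
      fix i :: int assume "i \<le> -1"
      then have "i < 0" by simp
      then show "trivial_group (reduced_homology_group i (geom_real \<Delta>))"
        by (rule trivial_reduced_homology_group)
    qed
    have Pb: "P k \<Longrightarrow> k < j" for k using j unfolding P_def by (meson not_le order_refl)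
    define Q where "Q = {k. -1 \<le> k \<and> k \<le> j \<and> P k}"
    have Qf: "finite Q" unfolding Q_def by (rule finite_subset[of _ "{-1..j}"]) auto
    have Qne: "-1 \<in> Q" unfolding Q_def using Pm1 Pb[OF Pm1] by auto
    define m where "m = Max Q"
    have mQ: "m \<in> Q" unfolding m_def using Qf Qne by (intro Max_in) auto
    have Pm: "P m" using mQ unfolding Q_def by auto
    have mmax: "k \<le> m" if "P k" for k
    proof (cases "-1 \<le> k")
      case True
      then have "k \<in> Q" unfolding Q_def using that Pb[OF that] by auto
      then show ?thesis unfolding m_def using Qf by auto
    next
      case False
      then show ?thesis using mQ unfolding Q_def by auto
    qed
    have G: "(GREATEST k::int. \<forall>i\<le>k. T i) = m"
      using Greatest_equality[of P m] Pm mmax unfolding P_def by blast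
    have "conn_h \<Delta> = ereal (of_int m)"
      using False nall G unfolding conn_h_def T_def by simp
    moreover have "k \<le> m \<longleftrightarrow> P k" using Pm mmax unfolding P_def by auto
    ultimately show ?thesis by (simp add: rt P_def)
  qed
qed

lemma Ind_cplx: assumes "finite W" shows "cplx (Ind W E)"
  unfolding cplx_def
proof (intro conjI ballI allI impI)
  fix \<sigma> assume "\<sigma> \<in> Ind W E"
  then have "\<sigma> \<subseteq> W" by (simp add: Ind_def)
  then show "finite \<sigma>" using assms by (rule finite_subset)
next
  fix \<sigma> \<tau> assume "\<sigma> \<in> Ind W E" "\<tau> \<subseteq> \<sigma>"
  then show "\<tau> \<in> Ind W E" unfolding Ind_def by blast
qed

lemma Ind_empty: "(\<forall>G\<in>E. G \<noteq> {}) \<Longrightarrow> {} \<in> Ind W E"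
  unfolding Ind_def by auto

lemma Lk_hyper:
  assumes hyp: "hypergraph V C" and FC: "F \<in> C"
  shows "{\<sigma> \<in> Ind V (hdel C F). \<not> F \<subseteq> \<sigma> \<and> \<sigma> \<union> F \<in> Ind V (hdel C F)}
       = J F (Ind (hcolon_vertices V C F) (hcolon_edges C F))"
    (is "?LHS = J F ?L")
proof -
  have finV: "finite V" and edges: "\<And>E. E \<in> C \<Longrightarrow> E \<subseteq> V \<and> 2 \<le> card E"
    and inc: "\<And>E E'. E \<in> C \<Longrightarrow> E' \<in> C \<Longrightarrow> E \<subseteq> E' \<Longrightarrow> E = E'"
    using hyp unfolding hypergraph_def by auto
  have FV: "F \<subseteq> V" using edges[OF FC] by auto
  define M where "M = {E - F | E. E \<in> hdel C F}"
  have E'_eq: "hcolon_edges C F = {G \<in> M. (\<forall>H\<in>M. H \<subseteq> G \<longrightarrow> H = G) \<and> 2 \<le> card G}"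
    unfolding hcolon_edges_def M_def Let_def ..
  have nbr: "v \<in> hnbr C F \<longleftrightarrow> (\<exists>E\<in>C. card (E - F) = 1 \<and> v \<in> E - F)" for v
    unfolding hnbr_def by blast
  show ?thesis
  proof (intro Set.set_eqI iffI)
    fix \<sigma> assume "\<sigma> \<in> ?LHS"
    then have \<sigma>V: "\<sigma> \<subseteq> V" and nF: "\<not> F \<subseteq> \<sigma>"
      and noE: "\<And>E. E \<in> C \<Longrightarrow> E \<noteq> F \<Longrightarrow> \<not> E \<subseteq> \<sigma> \<union> F"
      unfolding Ind_def hdel_def by auto
    have \<tau>L: "\<sigma> - F \<in> ?L"
      unfolding Ind_def hcolon_vertices_def
    proof (intro CollectI conjI)
      show "\<sigma> - F \<subseteq> V - (F \<union> hnbr C F)"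
      proof
        fix v assume v: "v \<in> \<sigma> - F"
        have "v \<notin> hnbr C F"
        proof
          assume "v \<in> hnbr C F"
          then obtain E where E: "E \<in> C" "card (E - F) = 1" "v \<in> E - F" using nbr by blast
          obtain w where w: "E - F = {w}" using E(2) by (rule card_1_singletonE)
          then have "E - F = {v}" using E(3) by auto
          then have "E \<subseteq> \<sigma> \<union> F" using v by auto
          moreover have "E \<noteq> F" using E(3) by auto
          ultimately show False using noE[OF E(1)] by blast
        qed
        then show "v \<in> V - (F \<union> hnbr C F)" using v \<sigma>V by auto
      qed
      show "\<not> (\<exists>G\<in>hcolon_edges C F. G \<subseteq> \<sigma> - F)"
      proof
        assume "\<exists>G\<in>hcolon_edges C F. G \<subseteq> \<sigma> - F"
        then obtain G where G: "G \<in> M" "G \<subseteq> \<sigma> - F" unfolding E'_eq by blast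
        then obtain E where E: "E \<in> C" "E \<noteq> F" "G = E - F" unfolding M_def hdel_def by blast
        have "E \<subseteq> \<sigma> \<union> F" using G(2) E(3) by auto
        then show False using noE[OF E(1,2)] by blast
      qed
    qed
    show "\<sigma> \<in> J F ?L"
      by (rule JI[of "\<sigma> \<inter> F" F "\<sigma> - F"]) (use nF \<tau>L in auto)
  next
    fix \<sigma> assume "\<sigma> \<in> J F ?L"
    then obtain \<sigma>1 \<tau> where st: "\<sigma> = \<sigma>1 \<union> \<tau>" "\<sigma>1 \<subseteq> F" "\<sigma>1 \<noteq> F" "\<tau> \<in> ?L"
      by (rule JE)
    have \<tau>V: "\<tau> \<subseteq> V - (F \<union> hnbr C F)" and \<tau>E: "\<And>G. G \<in> hcolon_edges C F \<Longrightarrow> \<not> G \<subseteq> \<tau>"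
      using st(4) unfolding Ind_def hcolon_vertices_def by auto
    have finC: "finite C"
    proof (rule finite_subset[of C "Pow V"])
      show "C \<subseteq> Pow V" using edges by auto
    qed (use finV in simp)
    have finM: "finite M" unfolding M_def hdel_def using finC by simp
    have FtK: "F \<union> \<tau> \<in> Ind V (hdel C F)"
      unfolding Ind_def
    proof (intro CollectI conjI)
      show "F \<union> \<tau> \<subseteq> V" using FV \<tau>V by auto
      show "\<not> (\<exists>E\<in>hdel C F. E \<subseteq> F \<union> \<tau>)"
      proof
        assume "\<exists>E\<in>hdel C F. E \<subseteq> F \<union> \<tau>"
        then obtain E where E: "E \<in> hdel C F" "E \<subseteq> F \<union> \<tau>" by blast
        define Mx where "Mx = {G \<in> M. G \<subseteq> E - F}"
        have Mxf: "finite Mx" unfolding Mx_def using finM by simp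
        have Mxne: "Mx \<noteq> {}" unfolding Mx_def M_def using E(1) by blast
        obtain G0 where G0: "G0 \<in> Mx" "\<forall>b\<in>Mx. b \<le> G0 \<longrightarrow> G0 = b"
          using finite_has_minimal[OF Mxf Mxne] by blast
        have G0M: "G0 \<in> M" and G0sub: "G0 \<subseteq> E - F" using G0(1) unfolding Mx_def by auto
        obtain E0 where E0: "E0 \<in> C" "E0 \<noteq> F" "G0 = E0 - F"
          using G0M unfolding M_def hdel_def by blast
        have G0t: "G0 \<subseteq> \<tau>" using G0sub E(2) by auto
        have minM: "\<forall>H\<in>M. H \<subseteq> G0 \<longrightarrow> H = G0"
        proof (intro ballI impI)
          fix H assume "H \<in> M" "H \<subseteq> G0"
          then have "H \<in> Mx" using G0sub unfolding Mx_def by auto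
          then show "H = G0" using G0(2) \<open>H \<subseteq> G0\<close> by auto
        qed
        have G0ne: "G0 \<noteq> {}"
        proof
          assume "G0 = {}"
          then have "E0 \<subseteq> F" using E0(3) by auto
          then show False using inc[OF E0(1) FC] E0(2) by blast
        qed
        have "G0 \<subseteq> V" using E0(3) edges[OF E0(1)] by auto
        then have G0fin: "finite G0" using finV by (rule finite_subset)
        show False
        proof (cases "2 \<le> card G0")
          case True
          then have "G0 \<in> hcolon_edges C F" unfolding E'_eq using G0M minM by blast
          then show False using \<tau>E G0t by blast
        next
          case False
          moreover have "card G0 \<noteq> 0" using G0ne G0fin by simp
          ultimately have "card G0 = 1" by linarith
          then obtain v where "G0 = {v}" by (rule card_1_singletonE)
          then have c1: "card (E0 - F) = 1" "v \<in> E0 - F" using E0(3) \<open>card G0 = 1\<close> by auto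
          have "v \<in> hnbr C F" unfolding nbr using E0(1) c1 by blast
          moreover have "v \<in> \<tau>" using G0t \<open>G0 = {v}\<close> by auto
          ultimately show False using \<tau>V by auto
        qed
      qed
    qed
    have \<tau>F: "\<tau> \<inter> F = {}" using \<tau>V by auto
    have sK: "\<sigma> \<in> Ind V (hdel C F)"
    proof -
      have sub: "\<sigma> \<subseteq> F \<union> \<tau>" using st(1,2) by auto
      have "F \<union> \<tau> \<subseteq> V" "\<not> (\<exists>E\<in>hdel C F. E \<subseteq> F \<union> \<tau>)" using FtK unfolding Ind_def by auto
      then show ?thesis using sub unfolding Ind_def by blast
    qed
    have nF: "\<not> F \<subseteq> \<sigma>"
    proof
      assume "F \<subseteq> \<sigma>"
      then have "F \<subseteq> \<sigma>1" using st(1) \<tau>F by auto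
      then show False using st(2,3) by auto
    qed
    have "\<sigma> \<union> F = F \<union> \<tau>" using st(1,2) by auto
    then show "\<sigma> \<in> ?LHS" using sK nF FtK by auto
  qed
qed

theorem lemma3p13:
  fixes V :: "'a set" and C :: "'a set set" and F :: "'a set"
  assumes "hypergraph V C" and "F \<in> C"
  shows "(conn_h (Ind V (hdel C F)) > conn_h (Ind V C) \<longrightarrow>
            conn_h (Ind (hcolon_vertices V C F) (hcolon_edges C F))
              \<ge> conn_h (Ind V C) - ereal (real (card F)) + 1)
       \<and> (conn_h (Ind (hcolon_vertices V C F) (hcolon_edges C F))
              \<ge> conn_h (Ind V C) - ereal (real (card F)) + 1 \<longrightarrow>
            conn_h (Ind V (hdel C F)) \<ge> conn_h (Ind V C))"
proof -
  let ?K = "Ind V (hdel C F)"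
  let ?A = "Ind V C"
  let ?L = "Ind (hcolon_vertices V C F) (hcolon_edges C F)"
  have finV: "finite V" and edges: "\<And>E. E \<in> C \<Longrightarrow> E \<subseteq> V \<and> 2 \<le> card E"
    and inc: "\<And>E E'. E \<in> C \<Longrightarrow> E' \<in> C \<Longrightarrow> E \<subseteq> E' \<Longrightarrow> E = E'"
    using assms(1) unfolding hypergraph_def by auto
  have FV: "F \<subseteq> V" and c2: "2 \<le> card F" using edges[OF assms(2)] by auto
  have finF: "finite F" using FV finV by (rule finite_subset)
  have Fne: "F \<noteq> {}" using c2 by auto
  have cK: "cplx ?K" and cA: "cplx ?A" by (rule Ind_cplx[OF finV])+
  have cL: "cplx ?L" by (rule Ind_cplx) (use finV in \<open>simp add: hcolon_vertices_def\<close>)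
  have ne_edge: "E \<noteq> {}" if "E \<in> C" for E using edges[OF that] by auto
  have eK: "{} \<in> ?K" by (rule Ind_empty) (use ne_edge in \<open>auto simp: hdel_def\<close>)
  have eA: "{} \<in> ?A" by (rule Ind_empty) (use ne_edge in auto)
  have eL: "{} \<in> ?L" by (rule Ind_empty) (auto simp: hcolon_edges_def Let_def)
  have FK: "F \<in> ?K"
    unfolding Ind_def hdel_def using FV inc assms(2) by auto
  interpret c: core ?K F by unfold_locales (use cK FK Fne in auto)
  have KA: "c.KA = ?A"
    unfolding c.KA_def unfolding Ind_def hdel_def using assms(2) by auto
  have Lk: "c.Lk = J F ?L"
    unfolding c.Lk_def by (rule Lk_hyper[OF assms])
  have disj: "\<forall>\<tau>\<in>?L. \<tau> \<inter> F = {}" unfolding Ind_def hcolon_vertices_def by auto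
  have R: "trivial_group (relative_homology_group i (geom_real ?K) (rset ?A)) \<longleftrightarrow> rtriv (i - int (card F)) ?L"
    for i
  proof -
    have "trivial_group (relative_homology_group i (geom_real ?K) (rset ?A)) \<longleftrightarrow> rtriv (i - 1) (J F ?L)"
      using c.core_thm[of i] unfolding KA Lk .
    also have "\<dots> \<longleftrightarrow> rtriv (i - 1 - int (card F) + 1) ?L"
      by (rule Q[OF cL eL finF Fne disj])
    also have "i - 1 - int (card F) + 1 = i - int (card F)" by simp
    finally show ?thesis .
  qed
  obtain v where v: "v \<in> F" using Fne by blast
  have vA: "{v} \<in> ?A"
    unfolding Ind_def
  proof (intro CollectI conjI)
    show "{v} \<subseteq> V" using v FV by auto
    show "\<not> (\<exists>E\<in>C. E \<subseteq> {v})"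
    proof
      assume "\<exists>E\<in>C. E \<subseteq> {v}"
      then obtain E where E: "E \<in> C" "E \<subseteq> {v}" by blast
      then have "card E \<le> card {v}" by (intro card_mono) auto
      then show False using edges[OF E(1)] by simp
    qed
  qed
  have AK: "?A \<subseteq> ?K" unfolding Ind_def hdel_def by auto
  have neA: "rset ?A \<noteq> {}" using vertex_in_rset[OF cA vA] by auto
  have neK: "rset ?K \<noteq> {}" using neA rset_mono[OF AK] by auto
  have subA: "subtopology (geom_real ?K) (rset ?A) = geom_real ?A" by (rule subtopology_geom_real[OF AK])
  have rtK: "rtriv i ?K \<longleftrightarrow> trivial_group (reduced_homology_group i (geom_real ?K))" for i
    using neK by (simp add: rtriv_def)
  have rtA: "rtriv i ?A \<longleftrightarrow> trivial_group (reduced_homology_group i (geom_real ?A))" for i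
    using neA by (simp add: rtriv_def)
  have ne2: "topspace (geom_real ?K) \<inter> rset ?A \<noteq> {}" using neA rset_mono[OF AK] by auto
  have la: "rtriv (i - int (card F)) ?L" if "rtriv i ?K" "rtriv (i - 1) ?A" for i
  proof -
    have "trivial_group (relative_homology_group i (geom_real ?K) (rset ?A))"
      by (rule exact_triv[OF homology_exactness_reduced_1[OF ne2, unfolded subA]])
         (use that rtK rtA in auto)
    then show ?thesis using R by blast
  qed
  have lb: "rtriv i ?K" if "rtriv (i - int (card F)) ?L" "rtriv i ?A" for i
  proof -
    have r: "trivial_group (relative_homology_group i (geom_real ?K) (rset ?A))" using R that(1) by blast
    have "trivial_group (reduced_homology_group i (geom_real ?K))"
      by (rule exact_triv[OF homology_exactness_reduced_3[where p=i and X="geom_real ?K" and S="rset ?A", unfolded subA]])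
         (use that r rtA in auto)
    then show ?thesis using rtK by blast
  qed
  show ?thesis
    by (rule arith_core[OF conn_char[OF cK eK] conn_char[OF cA eA] conn_char[OF cL eL]
          conn_cases conn_cases conn_cases la lb])
qed

end
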